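(* Let $g,h\in\mathbb F_q[x,y]$ be nonzero with $(x^l-1)(y^m-1)=g(x,y)h(x,y)$ in $\mathbb F_q[x,y]$, and let $C=\langle g\rangle$, $C^*=\langle h^*\rangle$ be the ideals of $\mathfrak R$ generated by the images of $g$ and $h^*$. Assume $C\neq\{0\}$ and $C^*\ne\{0\}$. Then $C^*\subseteq C$ if and only if $g(x,y)g^*(x,y)$ divides $(x^l-1)(y^m-1)$ in $\mathbb F_q[x,y]$.
   Context: $\mathfrak R=\mathbb F_q[x,y]/\langle x^l-1,y^m-1\rangle$. For nonzero $f\in\mathbb F_q[x,y]$ with $l_1=\deg_x f$, $l_2=\deg_y f$, the reciprocal polynomial is $f^*(x,y)=x^{l_1}y^{l_2}f(x^{-1},y^{-1})$. *)

theory Defs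
  imports "HOL-Computational_Algebra.Polynomial"
begin

text \<open>Bivariate polynomials F[x,y] are represented as F[x][y], i.e. 'a poly poly:
  the outer variable is y, the coefficients are univariate polynomials in x.\<close>

definition bvx :: "'a::comm_ring_1 poly poly" where
  "bvx = [:[:0, 1:]:]"

definition bvy :: "'a::comm_ring_1 poly poly" where
  "bvy = [:0, 1:]"

definition degx :: "'a::zero poly poly \<Rightarrow> nat" where
  "degx f = Max ((\<lambda>j. degree (coeff f j)) ` {..degree f})"

text \<open>Reciprocal f*(x,y) = x^{l1} y^{l2} f(1/x,1/y): the monomial c x^i y^j goes to c x^(l1-i) y^(l2-j).\<close>
definition recip :: "'a::comm_ring_1 poly poly \<Rightarrow> 'a poly poly" where
  "recip f = (\<Sum>i\<le>degx f. \<Sum>j\<le>degree f.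
      monom (monom (coeff (coeff f j) i) (degx f - i)) (degree f - j))"

definition Iset :: "nat \<Rightarrow> nat \<Rightarrow> 'a::comm_ring_1 poly poly set" where
  "Iset l m = {a * (bvx ^ l - 1) + b * (bvy ^ m - 1) | a b. True}"

text \<open>Elements of R = F[x,y]/<x^l-1,y^m-1> are cosets; cls l m p is the image of p in R.\<close>
definition cls :: "nat \<Rightarrow> nat \<Rightarrow> 'a::comm_ring_1 poly poly \<Rightarrow> 'a poly poly set" where
  "cls l m p = {q. p - q \<in> Iset l m}"

text \<open>The principal ideal of R generated by the image of f: {[f]*[a]} = {[f*a]}.\<close>
definition Rideal :: "nat \<Rightarrow> nat \<Rightarrow> 'a::comm_ring_1 poly poly \<Rightarrow> 'a poly poly set set" where
  "Rideal l m f = {cls l m (f * a) | a. True}"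

end

theory Submission imports Defs "HOL-Computational_Algebra.Field_as_Ring" "HOL-Computational_Algebra.Polynomial_Factorial" begin


lemma map_poly_add_hom:
  assumes "f 0 = 0" "\<And>x y. f (x + y) = f x + f y"
  shows "map_poly f (p + q) = map_poly f p + map_poly f q"
  by (intro poly_eqI) (simp add: coeff_map_poly assms)

lemma map_poly_mult_hom:
  fixes f :: "'a::comm_semiring_0 \<Rightarrow> 'b::comm_semiring_0"
  assumes "f 0 = 0" "\<And>x y. f (x + y) = f x + f y" "\<And>x y. f (x * y) = f x * f y"
  shows "map_poly f (p * q) = map_poly f p * map_poly f q"
proof (induction p)
  case 0 then show ?case by simp
next
  case (pCons a p)
  have "map_poly f (pCons a p * q) = map_poly f (smult a q + pCons 0 (p * q))"
    by simp
  also have "\<dots> = smult (f a) (map_poly f q) + pCons 0 (map_poly f p * map_poly f q)"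
    by (simp add: map_poly_add_hom[OF assms(1,2)] map_poly_smult assms map_poly_pCons pCons.IH)
  also have "\<dots> = map_poly f (pCons a p) * map_poly f q"
    by (simp add: map_poly_pCons assms)
  finally show ?case .
qed

lemma map_poly_minus_hom:
  fixes f :: "'a::comm_ring \<Rightarrow> 'b::comm_ring"
  assumes "f 0 = 0" "\<And>x y. f (x - y) = f x - f y"
  shows "map_poly f (p - q) = map_poly f p - map_poly f q"
  by (intro poly_eqI) (simp add: coeff_map_poly assms)

definition Lf :: "'a::comm_ring_1 poly \<Rightarrow> 'a poly poly" where
  "Lf v = map_poly (\<lambda>c. [:c:]) v"

lemma Lf_add: "Lf (p + q) = Lf p + Lf q"
  unfolding Lf_def by (rule map_poly_add_hom) auto
lemma Lf_minus: "Lf (p - q) = Lf p - Lf q"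
  unfolding Lf_def by (rule map_poly_minus_hom) auto
lemma Lf_mult: "Lf (p * q) = Lf p * Lf q"
  unfolding Lf_def by (rule map_poly_mult_hom) auto
lemma Lf_0[simp]: "Lf 0 = 0" by (simp add: Lf_def)
lemma Lf_1[simp]: "Lf 1 = 1" by (simp add: Lf_def)
lemma coeff_Lf: "coeff (Lf p) n = [:coeff p n:]"
  by (simp add: Lf_def coeff_map_poly)
lemma Lf_eq_iff[simp]: "Lf p = Lf q \<longleftrightarrow> p = q"
proof
  assume "Lf p = Lf q"
  then have "\<And>n. [:coeff p n:] = [:coeff q n:]" by (metis coeff_Lf)
  then show "p = q" by (intro poly_eqI) (metis coeff_pCons_0)
qed simp
lemma Lf_0_iff[simp]: "Lf p = 0 \<longleftrightarrow> p = 0"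
  using Lf_eq_iff[of p 0] by simp
lemma Lf_power: "Lf (p ^ n) = Lf p ^ n"
  by (induction n) (simp_all add: Lf_mult)
lemma degree_Lf[simp]: "degree (Lf p) = degree p"
  by (simp add: Lf_def degree_map_poly)
lemma Lf_smult: "Lf (smult c p) = smult [:c:] (Lf p)"
  by (intro poly_eqI) (simp add: coeff_Lf mult.commute)

lemma const_mult: "[:a * b:] = [:a:] * ([:b:] :: 'a::comm_ring_1 poly)" by simp
lemma const_power: "[:a ^ n:] = ([:a:] :: 'a::comm_ring_1 poly) ^ n"
  by (simp add: poly_const_pow)
lemma const_minus: "[:a - b:] = [:a:] - ([:b:] :: 'a::comm_ring_1 poly)" by simp

definition swp :: "'a::comm_ring_1 poly poly \<Rightarrow> 'a poly poly" where
  "swp p = poly (map_poly Lf p) bvx"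

lemma swp_pCons: "swp (pCons c p) = Lf c + bvx * swp p"
  by (simp add: swp_def map_poly_pCons)

lemma coeff_swp: "coeff (coeff (swp p) i) j = coeff (coeff p j) i"
proof (induction p arbitrary: j)
  case 0 then show ?case by (simp add: swp_def)
next
  case (pCons c p)
  have "coeff (coeff (bvx * swp p) i) j = (if j = 0 then 0 else coeff (coeff (swp p) i) (j - 1))"
    by (simp add: bvx_def coeff_pCons split: nat.splits)
  then show ?case
    by (simp add: swp_pCons coeff_Lf coeff_pCons pCons.IH split: nat.splits)
qed

lemma swp_swp[simp]: "swp (swp p) = p"
  by (intro poly_eqI) (simp add: poly_eq_iff coeff_swp)

lemma swp_add: "swp (p + q) = swp p + swp q"
  by (simp add: swp_def map_poly_add_hom Lf_add)
lemma swp_minus: "swp (p - q) = swp p - swp q"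
  by (simp add: swp_def map_poly_minus_hom Lf_minus)
lemma swp_mult: "swp (p * q) = swp p * swp q"
  by (simp add: swp_def map_poly_mult_hom Lf_add Lf_mult)
lemma swp_0[simp]: "swp 0 = 0" by (simp add: swp_def)
lemma swp_1[simp]: "swp 1 = 1" by (simp add: swp_def)
lemma swp_const[simp]: "swp [:a:] = Lf a"
  by (simp add: swp_def map_poly_pCons)
lemma swp_Lf[simp]: "swp (Lf a) = [:a:]"
  by (intro poly_eqI) (simp add: poly_eq_iff coeff_swp coeff_Lf coeff_pCons split: nat.splits)
lemma swp_eq_0_iff[simp]: "swp p = 0 \<longleftrightarrow> p = 0"
  by (metis swp_0 swp_swp)
lemma swp_dvd: "p dvd q \<Longrightarrow> swp p dvd swp q"
  by (auto simp: swp_mult elim!: dvdE)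



lemma content_Lf:
  fixes Q :: "'b::field_gcd poly"
  assumes "Q \<noteq> 0"
  shows "content (Lf Q) = 1"
proof -
  have "content (Lf Q) dvd [:lead_coeff Q:]"
    using content_dvd_coeff[of "Lf Q" "degree Q"] by (simp add: coeff_Lf)
  moreover have "is_unit [:lead_coeff Q:]" using assms by (simp add: is_unit_const_poly_iff dvd_field_iff)
  ultimately have "is_unit (content (Lf Q))" using dvd_unit_imp_unit by blast
  then show ?thesis by (metis normalize_content is_unit_normalize)
qed

lemma factor_fg:
  fixes g h :: "'b::field_gcd poly poly" and P Q :: "'b poly"
  assumes eq: "g * h = [:P:] * Lf Q" and P: "P \<noteq> 0" and Q: "Q \<noteq> 0"
  shows "\<exists>A B. g = [:A:] * Lf B"
proof -
  have g0: "g \<noteq> 0" and h0: "h \<noteq> 0" using eq P Q by auto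
  define r where "r = primitive_part g * primitive_part h"
  have gh: "g * h = smult (content g * content h) r"
  proof -
    have "g * h = smult (content g) (primitive_part g) * smult (content h) (primitive_part h)"
      by simp
    also have "\<dots> = smult (content g * content h) r"
      by (simp del: content_times_primitive_part add: r_def mult.commute)
    finally show ?thesis .
  qed
  have "content (g * h) = content g * content h" by (rule content_mult)
  also have "content (g * h) = normalize P"
    using eq Q by (simp add: content_Lf)
  finally have cc: "content g * content h = normalize P" by simp
  have rs: "smult (normalize P) r = smult P (Lf Q)"
    using eq gh cc by simp
  have deg0: "degree (coeff r j) = 0" for j
  proof (cases "coeff r j = 0")
    case False
    have "normalize P * coeff r j = P * [:coeff Q j:]"
      using arg_cong[OF rs, of "\<lambda>p. coeff p j"] by (simp add: coeff_Lf mult.commute)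
    moreover have "degree (normalize P * coeff r j) = degree (normalize P) + degree (coeff r j)"
      using False P by (simp add: degree_mult_eq)
    ultimately have "degree (normalize P) + degree (coeff r j) = degree (P * [:coeff Q j:])"
      by simp
    also have "\<dots> \<le> degree P" using degree_smult_le[of "coeff Q j" P] by (simp add: mult.commute)
    moreover have "degree P = degree (normalize P)"
    proof -
      have "P = normalize P * unit_factor P" by simp
      moreover have "degree (normalize P * unit_factor P) = degree (normalize P) + degree (unit_factor P)"
        using P by (intro degree_mult_eq) auto
      ultimately have "degree P = degree (normalize P) + degree (unit_factor P)"
        by simp
      moreover have "is_unit (unit_factor P)" using P by simp
      then have "degree (unit_factor P) = 0"
        using P is_unit_iff_degree unit_factor_eq_0_iff by blast
      ultimately show ?thesis by simp
    qed
    ultimately show ?thesis by simp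
  qed simp
  have "degree (swp r) = 0"
  proof -
    have "coeff (swp r) i = 0" if "i > 0" for i
      using that deg0 by (intro poly_eqI) (simp add: coeff_swp coeff_eq_0)
    then have "degree (swp r) \<le> 0" by (intro degree_le) auto
    then show ?thesis by simp
  qed
  moreover have "swp r = swp (primitive_part g) * swp (primitive_part h)"
    by (simp add: r_def swp_mult)
  moreover have "swp (primitive_part g) \<noteq> 0" "swp (primitive_part h) \<noteq> 0"
    using g0 h0 by auto
  ultimately have "degree (swp (primitive_part g)) = 0"
    by (simp add: degree_mult_eq)
  then have "swp (primitive_part g) = [:coeff (swp (primitive_part g)) 0:]"
    by (simp add: degree_0_id)
  then have "swp (swp (primitive_part g)) = swp [:coeff (swp (primitive_part g)) 0:]"
    by simp
  then have "primitive_part g = Lf (coeff (swp (primitive_part g)) 0)"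
    by simp
  then have "g = [:content g:] * Lf (coeff (swp (primitive_part g)) 0)"
    by (metis content_times_primitive_part mult.commute mult_smult_left mult_1 smult_one mult_smult_right)
  then show ?thesis by blast
qed



typedef 'a fw = "UNIV :: 'a::field set" morphisms fr fa by auto

setup_lifting type_definition_fw

instantiation fw :: (field) field
begin
lift_definition zero_fw :: "'a fw" is 0 .
lift_definition one_fw :: "'a fw" is 1 .
lift_definition plus_fw :: "'a fw \<Rightarrow> 'a fw \<Rightarrow> 'a fw" is "(+)" .
lift_definition minus_fw :: "'a fw \<Rightarrow> 'a fw \<Rightarrow> 'a fw" is "(-)" .
lift_definition uminus_fw :: "'a fw \<Rightarrow> 'a fw" is uminus .
lift_definition times_fw :: "'a fw \<Rightarrow> 'a fw \<Rightarrow> 'a fw" is "(*)" .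
lift_definition inverse_fw :: "'a fw \<Rightarrow> 'a fw" is inverse .
lift_definition divide_fw :: "'a fw \<Rightarrow> 'a fw \<Rightarrow> 'a fw" is "(/)" .
instance
  by standard (transfer; simp add: field_simps)+
end

instantiation fw :: (field)
  "{unique_euclidean_ring, normalization_euclidean_semiring, normalization_semidom_multiplicative}"
begin
definition [simp]: "normalize_fw = (normalize_field :: 'a fw \<Rightarrow> _)"
definition [simp]: "unit_factor_fw = (unit_factor_field :: 'a fw \<Rightarrow> _)"
definition [simp]: "modulo_fw = (mod_field :: 'a fw \<Rightarrow> _)"
definition [simp]: "euclidean_size_fw = (euclidean_size_field :: 'a fw \<Rightarrow> _)"
definition [simp]: "division_segment (x :: 'a fw) = 1"
instance
  by standard
    (simp_all add: dvd_field_iff field_split_simps split: if_splits)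
end

instantiation fw :: (field) euclidean_ring_gcd
begin
definition gcd_fw :: "'a fw \<Rightarrow> 'a fw \<Rightarrow> 'a fw" where
  "gcd_fw = Euclidean_Algorithm.gcd"
definition lcm_fw :: "'a fw \<Rightarrow> 'a fw \<Rightarrow> 'a fw" where
  "lcm_fw = Euclidean_Algorithm.lcm"
definition Gcd_fw :: "'a fw set \<Rightarrow> 'a fw" where
 "Gcd_fw = Euclidean_Algorithm.Gcd"
definition Lcm_fw :: "'a fw set \<Rightarrow> 'a fw" where
 "Lcm_fw = Euclidean_Algorithm.Lcm"
instance by standard (simp_all add: gcd_fw_def lcm_fw_def Gcd_fw_def Lcm_fw_def)
end

instance fw :: (field) field_gcd ..

lemma fr_add: "fr (x + y) = fr x + fr y" by transfer simp
lemma fr_mult: "fr (x * y) = fr x * fr y" by transfer simp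
lemma fr_0: "fr 0 = 0" by transfer simp
lemma fa_0: "fa 0 = 0" by (metis fr_0 fr_inverse)
lemma fa_add: "fa (x + y) = fa x + fa y"
  by (metis fa_inverse fr_add fr_inverse UNIV_I)
lemma fa_mult: "fa (x * y) = fa x * fa y"
  by (metis fa_inverse fr_mult fr_inverse UNIV_I)

lemma mfa_add: "map_poly fa (p + q) = map_poly fa p + map_poly fa q"
  by (rule map_poly_add_hom) (simp_all add: fa_0 fa_add)
lemma mfa_mult: "map_poly fa (p * q) = map_poly fa p * map_poly fa q"
  by (rule map_poly_mult_hom) (simp_all add: fa_0 fa_add fa_mult)
lemma mfa_0: "map_poly fa 0 = 0" by simp

lemma factor_gen:
  fixes g h :: "'a::field poly poly" and P Q :: "'a poly"
  assumes eq: "g * h = [:P:] * Lf Q" and P: "P \<noteq> 0" and Q: "Q \<noteq> 0"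
  shows "\<exists>A B. g = [:A:] * Lf B"
proof -
  let ?F = "map_poly (map_poly fa)"
  let ?R = "map_poly (map_poly fr)"
  have F_mult: "?F (p * q) = ?F p * ?F q" for p q
    by (rule map_poly_mult_hom) (simp_all add: mfa_add mfa_mult)
  have RF: "?R (?F p) = p" for p :: "'a poly poly"
  proof -
    have "?R (?F p) = map_poly (map_poly fr \<circ> map_poly fa) p"
      by (simp add: map_poly_map_poly fr_0)
    also have "map_poly fr \<circ> map_poly fa = (id :: 'a poly \<Rightarrow> _)"
      by (rule ext) (simp add: map_poly_map_poly fr_0 fa_0 fa_inverse comp_def)
    finally show ?thesis by simp
  qed
  have FL: "?F (Lf v) = Lf (map_poly fa v)" for v
    unfolding Lf_def by (simp add: map_poly_map_poly fa_0 comp_def map_poly_pCons)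
  have RL: "?R (Lf v) = Lf (map_poly fr v)" for v
    unfolding Lf_def by (simp add: map_poly_map_poly fr_0 comp_def map_poly_pCons)
  have FC: "?F [:c:] = [:map_poly fa c:]" for c
    by (simp add: map_poly_pCons fa_0)
  have RC: "?R [:c:] = [:map_poly fr c:]" for c
    by (simp add: map_poly_pCons fr_0)
  have R_mult: "?R (p * q) = ?R p * ?R q" for p q :: "'a fw poly poly"
  proof -
    have a: "map_poly fr (p + q) = map_poly fr p + map_poly fr q" for p q :: "'a fw poly"
      by (rule map_poly_add_hom) (simp_all add: fr_0 fr_add)
    have m: "map_poly fr (p * q) = map_poly fr p * map_poly fr q" for p q :: "'a fw poly"
      by (rule map_poly_mult_hom) (simp_all add: fr_0 fr_add fr_mult)
    show ?thesis by (rule map_poly_mult_hom) (simp_all add: a m)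
  qed
  have "?F g * ?F h = [:map_poly fa P:] * Lf (map_poly fa Q)"
    using arg_cong[OF eq, of ?F] by (simp only: F_mult FL FC)
  moreover have "map_poly fa P \<noteq> 0" "map_poly fa Q \<noteq> 0"
    using P Q RF by (metis map_poly_eq_0_iff fa_0 fa_inverse UNIV_I fr_0 leading_coeff_0_iff
        coeff_map_poly)+
  ultimately obtain A B where "?F g = [:A:] * Lf B" using factor_fg by blast
  then have "?R (?F g) = [:map_poly fr A:] * Lf (map_poly fr B)"
    by (simp only: R_mult RL RC)
  then show ?thesis using RF by metis
qed



lemma coeff_coeff_recip:
  "coeff (coeff (recip f) j) i =
     (if i \<le> degx f \<and> j \<le> degree f then coeff (coeff f (degree f - j)) (degx f - i) else 0)"
proof -
  let ?dx = "degx f" and ?dy = "degree f"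
  have "coeff (coeff (recip f) j) i =
    (\<Sum>i'\<le>?dx. \<Sum>j'\<le>?dy. if j' = ?dy - j \<and> j \<le> ?dy \<and> i' = ?dx - i \<and> i \<le> ?dx
        then coeff (coeff f j') i' else 0)"
    unfolding recip_def coeff_sum
    by (intro sum.cong refl) (auto simp: coeff_monom)
  also have "\<dots> = (\<Sum>i'\<le>?dx. if i' = ?dx - i \<and> i \<le> ?dx \<and> j \<le> ?dy
        then coeff (coeff f (?dy - j)) i' else 0)"
    by (intro sum.cong refl) (auto simp: sum.delta' if_distrib cong: if_cong)
  also have "\<dots> = (if i \<le> ?dx \<and> j \<le> ?dy then coeff (coeff f (?dy - j)) (?dx - i) else 0)"
    by (auto simp: sum.delta' cong: if_cong)
  finally show ?thesis .
qed

lemma coeff_CL: "coeff ([:A:] * Lf B) j = smult (coeff B j) A"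
  by (simp add: coeff_Lf mult.commute)
lemma coeff_CL': "coeff (smult A (Lf B)) j = smult (coeff B j) A"
  by (simp add: coeff_Lf mult.commute)

lemma degree_CL: "(A::'a::field poly) \<noteq> 0 \<Longrightarrow> B \<noteq> 0 \<Longrightarrow> degree ([:A:] * Lf B) = degree B"
  by (simp add: degree_smult_eq)


lemma degx_CL:
  fixes A B :: "'a::field poly"
  assumes "A \<noteq> 0" "B \<noteq> 0"
  shows "degx ([:A:] * Lf B) = degree A"
  unfolding degx_def degree_CL[OF assms]
proof (rule Max_eqI)
  fix y assume "y \<in> (\<lambda>j. degree (coeff ([:A:] * Lf B) j)) ` {..degree B}"
  then show "y \<le> degree A" by (auto simp del: mult_pCons_left simp: coeff_CL degree_smult_le)
next
  show "degree A \<in> (\<lambda>j. degree (coeff ([:A:] * Lf B) j)) ` {..degree B}"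
    using assms by (intro image_eqI[of _ _ "degree B"]) (auto simp del: mult_pCons_left simp: coeff_CL)
qed simp

lemma recip_CL:
  fixes A B :: "'a::field poly"
  assumes "A \<noteq> 0" "B \<noteq> 0"
  shows "recip ([:A:] * Lf B) = [:reflect_poly A:] * Lf (reflect_poly B)"
  apply (rule poly_eqI)
  apply (rule poly_eqI)
  apply (simp only: coeff_coeff_recip degx_CL[OF assms] degree_CL[OF assms] coeff_CL)
  apply (simp add: coeff_reflect_poly not_less)
  done

lemma keyK:
  fixes u v a p q :: "'a::field poly" and W S T :: "'a poly poly"
  assumes eq: "[:u:] * Lf v = [:a:] * W + S * [:p:] + T * Lf q" and ap: "a dvd p"
    and q1: "lead_coeff q = 1" and dv: "degree v < degree q" and v0: "v \<noteq> 0"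
  shows "a dvd u"
proof -
  have base: "a dvd u" if "[:a:] dvd [:u:] * Lf v"
  proof -
    have "a dvd smult (lead_coeff v) u"
      using that by (simp del: mult_pCons_left add: const_poly_dvd_iff coeff_CL)
    then have "a dvd smult (inverse (lead_coeff v)) (smult (lead_coeff v) u)"
      by (rule dvd_smult)
    then show ?thesis using v0 by simp
  qed
  define mu where "mu T = (if T = 0 then 0 else Suc (degree T))" for T :: "'a poly poly"
  have claim: "[:a:] dvd ([:u:] * Lf v - T * Lf q) \<Longrightarrow> a dvd u" for T
  proof (induction "mu T" arbitrary: T rule: less_induct)
    case less
    show ?case
    proof (cases "T = 0")
      case True then show ?thesis using less.prems base by simp
    next
      case False
      define k where "k = degree T"
      define c where "c = lead_coeff T"
      have c0: "c \<noteq> 0" using False by (simp add: c_def)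
      have q0: "q \<noteq> 0" using q1 by auto
      have "coeff ([:u:] * Lf v) (k + degree q) = 0"
      proof (rule coeff_eq_0)
        have "degree ([:u:] * Lf v) \<le> degree [:u:] + degree (Lf v)" by (rule degree_mult_le)
        then show "degree ([:u:] * Lf v) < k + degree q" using dv by simp
      qed
      moreover have "coeff (T * Lf q) (k + degree q) = c"
        using coeff_mult_degree_sum[of T "Lf q"] q1
        by (simp add: k_def c_def coeff_Lf)
      ultimately have "coeff ([:u:] * Lf v - T * Lf q) (k + degree q) = - c" by simp
      then have "a dvd - c" using less.prems const_poly_dvd_iff by metis
      then have adc: "a dvd c" by simp
      have mdvd: "[:a:] dvd monom c k" using adc
        by (simp add: const_poly_dvd_iff coeff_monom)
      define T' where "T' = T - monom c k"
      have "[:u:] * Lf v - T' * Lf q = ([:u:] * Lf v - T * Lf q) + monom c k * Lf q"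
        by (simp add: T'_def algebra_simps)
      then have dvd': "[:a:] dvd ([:u:] * Lf v - T' * Lf q)"
        using less.prems mdvd by (metis dvd_add dvd_mult2)
      have "mu T' < mu T"
      proof (cases "T' = 0")
        case True then show ?thesis using False by (simp add: mu_def)
      next
        case T'0: False
        have "coeff T' n = 0" if "n \<ge> k" for n
          using that by (cases "n = k") (auto simp: T'_def k_def c_def coeff_monom coeff_eq_0)
        then have "degree T' \<le> k" by (intro degree_le) auto
        moreover have "degree T' \<noteq> k"
          using T'0 \<open>\<And>n. n \<ge> k \<Longrightarrow> coeff T' n = 0\<close> leading_coeff_0_iff by blast
        ultimately show ?thesis using False T'0 by (simp add: mu_def k_def)
      qed
      then show ?thesis using less.hyps dvd' by blast
    qed
  qed
  have "[:u:] * Lf v - T * Lf q = [:a:] * W + S * [:p:]" using eq by simp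
  moreover have "[:a:] dvd [:a:] * W + S * [:p:]"
  proof (rule dvd_add)
    show "[:a:] dvd [:a:] * W" by (rule dvd_triv_left)
    obtain k where "p = a * k" using ap by blast
    then have pp: "[:p:] = [:a:] * [:k:]" by simp
    have "S * [:p:] = [:a:] * (S * [:k:])" by (simp only: pp mult_ac)
    then show "[:a:] dvd S * [:p:]" by (metis dvd_triv_left)
  qed
  ultimately show ?thesis using claim by metis
qed



definition XP :: "nat \<Rightarrow> 'a::field poly" where "XP n = monom 1 n - 1"

lemma coeff_XP: "coeff (XP n) i = (if i = n then 1 else 0) - (if i = 0 then 1 else 0)"
  by (simp add: XP_def coeff_1)

lemma degree_XP: "n \<ge> 1 \<Longrightarrow> degree (XP n) = n"
  by (intro antisym degree_le le_degree) (auto simp: coeff_XP)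

lemma lead_XP: "n \<ge> 1 \<Longrightarrow> lead_coeff (XP n) = 1"
  by (simp add: degree_XP coeff_XP)

lemma XP_ne0: "n \<ge> 1 \<Longrightarrow> XP n \<noteq> 0"
  by (metis lead_XP coeff_0 zero_neq_one)

lemma reflect_XP: "n \<ge> 1 \<Longrightarrow> reflect_poly (XP n) = - XP n"
  by (intro poly_eqI) (auto simp: coeff_reflect_poly degree_XP coeff_XP)

lemma const_minus1: "[:x:] - 1 = [:x - 1:]" by (simp add: one_pCons)

lemma bvx_XP: "bvx ^ l - 1 = ([:XP l:] :: 'a::field poly poly)"
  by (simp add: bvx_def XP_def poly_const_pow monom_altdef const_minus1)

lemma bvy_XP: "bvy ^ m - 1 = (Lf (XP m) :: 'a::field poly poly)"
proof -
  have e: "Lf [:0, 1:] = bvy" by (simp add: Lf_def bvy_def map_poly_pCons)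
  show ?thesis by (simp add: XP_def monom_altdef Lf_minus Lf_power e)
qed

lemma Iset_iff: "(x :: 'a::field poly poly) \<in> Iset l m \<longleftrightarrow> (\<exists>s t. x = s * [:XP l:] + t * Lf (XP m))"
  by (simp add: Iset_def bvx_XP bvy_XP)

lemma Iset_add: "x \<in> Iset l m \<Longrightarrow> y \<in> Iset l m \<Longrightarrow> (x + y :: 'a::field poly poly) \<in> Iset l m"
proof -
  assume "x \<in> Iset l m" "y \<in> Iset l m"
  then obtain s t s' t' where "x = s * [:XP l:] + t * Lf (XP m)" "y = s' * [:XP l:] + t' * Lf (XP m)"
    by (auto simp: Iset_iff)
  then have "x + y = (s + s') * [:XP l:] + (t + t') * Lf (XP m)" by (simp add: algebra_simps smult_add_right)
  then show ?thesis unfolding Iset_iff by blast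
qed

lemma Iset_uminus: "x \<in> Iset l m \<Longrightarrow> (- x :: 'a::field poly poly) \<in> Iset l m"
proof -
  assume "x \<in> Iset l m"
  then obtain s t where "x = s * [:XP l:] + t * Lf (XP m)"
    by (auto simp: Iset_iff)
  then have "- x = (- s) * [:XP l:] + (- t) * Lf (XP m)" by (simp add: algebra_simps)
  then show ?thesis unfolding Iset_iff by blast
qed

lemma Iset_mult: "x \<in> Iset l m \<Longrightarrow> (x * y :: 'a::field poly poly) \<in> Iset l m"
proof -
  assume "x \<in> Iset l m"
  then obtain s t where "x = s * [:XP l:] + t * Lf (XP m)"
    by (auto simp: Iset_iff)
  then have "x * y = (s * y) * [:XP l:] + (t * y) * Lf (XP m)" by (simp add: algebra_simps)
  then show ?thesis unfolding Iset_iff by blast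
qed

lemma Iset_0: "(0 :: 'a::field poly poly) \<in> Iset l m"
  using Iset_iff[of 0 l m] by (metis mult_zero_left add_0_right)

lemma Iset_diff: "x \<in> Iset l m \<Longrightarrow> y \<in> Iset l m \<Longrightarrow> (x - y :: 'a::field poly poly) \<in> Iset l m"
  using Iset_add[OF _ Iset_uminus] by (metis diff_conv_add_uminus)

lemma cls_eq: "(p - q :: 'a::field poly poly) \<in> Iset l m \<Longrightarrow> cls l m p = cls l m q"
proof -
  assume pq: "p - q \<in> Iset l m"
  have "p - x \<in> Iset l m \<longleftrightarrow> q - x \<in> Iset l m" for x
  proof
    assume "p - x \<in> Iset l m"
    from Iset_diff[OF this pq] show "q - x \<in> Iset l m" by simp
  next
    assume "q - x \<in> Iset l m"
    from Iset_add[OF this pq] show "p - x \<in> Iset l m" by simp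
  qed
  then show ?thesis by (auto simp: cls_def)
qed

lemma Iset_Rideal: "(f :: 'a::field poly poly) \<in> Iset l m \<Longrightarrow> Rideal l m f = {cls l m 0}"
proof -
  assume "f \<in> Iset l m"
  have "cls l m (f * a) = cls l m 0" for a
    using Iset_mult[OF \<open>f \<in> Iset l m\<close>] by (intro cls_eq) simp
  then show ?thesis unfolding Rideal_def by auto
qed

lemma sep_dvd:
  fixes u v u2 v2 :: "'a::field poly"
  assumes "[:u:] * Lf v dvd [:u2:] * Lf v2" "v2 \<noteq> 0"
  shows "u dvd u2"
proof -
  have "[:u:] dvd [:u2:] * Lf v2" using assms(1) dvd_mult_left by blast
  then have "u dvd smult (lead_coeff v2) u2"
    by (simp del: mult_pCons_left add: const_poly_dvd_iff coeff_CL)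
  then have "u dvd smult (inverse (lead_coeff v2)) (smult (lead_coeff v2) u2)"
    by (rule dvd_smult)
  then show ?thesis using assms(2) by simp
qed

lemma sep_dvd_iff:
  fixes u v u2 v2 :: "'a::field poly"
  assumes "u2 \<noteq> 0" "v2 \<noteq> 0"
  shows "[:u:] * Lf v dvd [:u2:] * Lf v2 \<longleftrightarrow> u dvd u2 \<and> v dvd v2"
proof
  assume d: "[:u:] * Lf v dvd [:u2:] * Lf v2"
  have "u dvd u2" using sep_dvd[OF d assms(2)] .
  moreover have "swp ([:u:] * Lf v) dvd swp ([:u2:] * Lf v2)" using d by (rule swp_dvd)
  then have "[:v:] * Lf u dvd [:v2:] * Lf u2" by (simp only: swp_mult swp_const swp_Lf mult.commute)
  then have "v dvd v2" using sep_dvd assms(1) by blast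
  ultimately show "u dvd u2 \<and> v dvd v2" ..
next
  assume "u dvd u2 \<and> v dvd v2"
  then obtain k1 k2 where "u2 = u * k1" "v2 = v * k2" by (auto elim!: dvdE)
  then have "[:u2:] * Lf v2 = ([:u:] * Lf v) * ([:k1:] * Lf k2)"
    by (simp only: Lf_mult const_mult mult_ac)
  then show "[:u:] * Lf v dvd [:u2:] * Lf v2" by (metis dvd_triv_left)
qed



theorem mainTheorem4:
  fixes g h :: "'a::{field,finite} poly poly" and l m :: nat
  assumes "g \<noteq> 0" and "h \<noteq> 0"
    and "(bvx ^ l - 1) * (bvy ^ m - 1) = g * h"
    and "Rideal l m g \<noteq> {cls l m 0}"
    and "Rideal l m (recip h) \<noteq> {cls l m 0}"
  shows "Rideal l m (recip h) \<subseteq> Rideal l m g \<longleftrightarrow>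
         g * recip g dvd (bvx ^ l - 1) * (bvy ^ m - 1)"
proof -
  define P where "P = (XP l :: 'a poly)"
  define Q where "Q = (XP m :: 'a poly)"
  have PQ: "(bvx ^ l - 1) * (bvy ^ m - 1) = [:P:] * Lf Q"
    by (simp only: bvx_XP bvy_XP P_def Q_def)
  have eq: "g * h = [:P:] * Lf Q" using assms(3) PQ by simp
  have l1: "l \<ge> 1"
  proof (rule ccontr)
    assume "\<not> l \<ge> 1"
    then have "l = 0" by simp
    then have "bvx ^ l - 1 = (0 :: 'a poly poly)" by simp
    then show False using assms(1,2,3) by simp
  qed
  have m1: "m \<ge> 1"
  proof (rule ccontr)
    assume "\<not> m \<ge> 1"
    then have "m = 0" by simp
    then have "bvy ^ m - 1 = (0 :: 'a poly poly)" by simp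
    then show False using assms(1,2,3) by simp
  qed
  have P0: "P \<noteq> 0" and Q0: "Q \<noteq> 0" using XP_ne0 l1 m1 by (auto simp: P_def Q_def)
  have dP: "degree P = l" and dQ: "degree Q = m" using degree_XP l1 m1 by (auto simp: P_def Q_def)
  have lP: "lead_coeff P = 1" and lQ: "lead_coeff Q = 1" using lead_XP l1 m1 by (auto simp: P_def Q_def)
  have rP: "reflect_poly P = - P" and rQ: "reflect_poly Q = - Q"
    using reflect_XP l1 m1 by (auto simp: P_def Q_def)
  obtain A B0 where g: "g = [:A:] * Lf B0" using factor_gen[OF eq P0 Q0] by blast
  obtain A1 B1 where h1: "h = [:A1:] * Lf B1" using factor_gen[of h g P Q] eq P0 Q0
    by (metis mult.commute)
  have A0: "A \<noteq> 0" and B00: "B0 \<noteq> 0" using assms(1) g by auto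
  have A10: "A1 \<noteq> 0" and B10: "B1 \<noteq> 0" using assms(2) h1 by auto
  have e1: "[:A * A1:] * Lf (B0 * B1) = [:P:] * Lf Q"
    using eq unfolding g h1 by (simp only: Lf_mult const_mult mult_ac)
  define e where "e = coeff (B0 * B1) m"
  have "smult e (A * A1) = P"
    using arg_cong[OF e1, of "\<lambda>p. coeff p m"] lQ dQ
    by (simp del: mult_pCons_left add: coeff_CL e_def)
  then have e0: "e \<noteq> 0" using P0 by auto
  define A' where "A' = smult e A1"
  define B' where "B' = smult (inverse e) B1"
  have h: "h = [:A':] * Lf B'"
    unfolding h1
    by (intro poly_eqI) (simp del: mult_pCons_left add: coeff_CL A'_def B'_def e0)
  have AA: "A * A' = P" using \<open>smult e (A * A1) = P\<close> by (simp add: A'_def)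
  have "[:P:] * Lf (B0 * B') = [:P:] * Lf Q"
    using eq unfolding g h AA[symmetric] by (simp only: Lf_mult const_mult mult_ac)
  then have "Lf (B0 * B') = Lf Q" using P0 by (metis mult_left_cancel pCons_eq_0_iff)
  then have BB: "B0 * B' = Q" by simp
  have A'0: "A' \<noteq> 0" and B'0: "B' \<noteq> 0" using A10 B10 e0 by (auto simp: A'_def B'_def)
  define B where "B = B0"
  note defs = B_def[symmetric]
  have g: "g = [:A:] * Lf B" using g by (simp add: B_def)
  have BB: "B * B' = Q" using BB by (simp add: B_def)
  have B0: "B \<noteq> 0" using B00 by (simp add: B_def)
  have rh: "recip h = [:reflect_poly A':] * Lf (reflect_poly B')"
    unfolding h by (rule recip_CL[OF A'0 B'0])
  have rg: "recip g = [:reflect_poly A:] * Lf (reflect_poly B)"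
    unfolding g by (rule recip_CL[OF A0 B0])
  have rAA: "reflect_poly A * reflect_poly A' = - P"
    using rP by (simp add: AA flip: reflect_poly_mult)
  have rBB: "reflect_poly B * reflect_poly B' = - Q"
    using rQ by (simp add: BB flip: reflect_poly_mult)
  have rA0: "reflect_poly A \<noteq> 0" and rB0: "reflect_poly B \<noteq> 0"
    and rA'0: "reflect_poly A' \<noteq> 0" and rB'0: "reflect_poly B' \<noteq> 0"
    using A0 B0 A'0 B'0 by auto
  have RHS: "g * recip g dvd (bvx ^ l - 1) * (bvy ^ m - 1) \<longleftrightarrow>
     A dvd reflect_poly A' \<and> B dvd reflect_poly B'"
  proof -
    have "g * recip g = [:A * reflect_poly A:] * Lf (B * reflect_poly B)"
      unfolding rg unfolding g by (simp only: Lf_mult const_mult mult_ac)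
    then have "g * recip g dvd (bvx ^ l - 1) * (bvy ^ m - 1) \<longleftrightarrow>
        A * reflect_poly A dvd P \<and> B * reflect_poly B dvd Q"
      using sep_dvd_iff[OF P0 Q0] PQ by simp
    also have "A * reflect_poly A dvd P \<longleftrightarrow> A dvd reflect_poly A'"
    proof -
      have "A * reflect_poly A dvd P \<longleftrightarrow> reflect_poly A * A dvd reflect_poly A * reflect_poly A'"
        using rAA by (simp add: mult.commute)
      also have "\<dots> \<longleftrightarrow> A dvd reflect_poly A'" using rA0 by simp
      finally show ?thesis .
    qed
    also have "B * reflect_poly B dvd Q \<longleftrightarrow> B dvd reflect_poly B'"
    proof -
      have "B * reflect_poly B dvd Q \<longleftrightarrow> reflect_poly B * B dvd reflect_poly B * reflect_poly B'"
        using rBB by (simp add: mult.commute)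
      also have "\<dots> \<longleftrightarrow> B dvd reflect_poly B'" using rB0 by simp
      finally show ?thesis .
    qed
    finally show ?thesis .
  qed
  let ?rA = "reflect_poly A'" and ?rB = "reflect_poly B'"
  have notI: "recip h \<notin> Iset l m" using assms(5) Iset_Rideal by blast
  have IsetQ: "[:u:] * Lf (smult c Q) \<in> Iset l m" for u c
  proof -
    have "[:u:] * Lf (smult c Q) = 0 * [:P:] + ([:u:] * [:[:c:]:]) * Lf Q"
      by (simp add: Lf_smult)
    then show ?thesis unfolding Iset_iff P_def Q_def by blast
  qed
  have IsetP: "[:smult c P:] * Lf v \<in> Iset l m" for v c
  proof -
    have "[:smult c P:] * Lf v = (Lf v * [:[:c:]:]) * [:P:] + 0 * Lf Q"
      by (simp add: mult.commute)
    then show ?thesis unfolding Iset_iff P_def Q_def by blast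
  qed
  have drB: "degree ?rB < m"
  proof (rule ccontr)
    assume "\<not> degree ?rB < m"
    moreover have "degree ?rB \<le> degree B'" by (rule degree_reflect_poly_le)
    moreover have "degree B' \<le> m" using dvd_imp_degree_le[of B' Q] BB Q0 dQ by auto
    ultimately have dB': "degree B' = m" by simp
    have "degree B + degree B' = m" using BB dQ B0 B'0 degree_mult_eq by metis
    then have "degree B = 0" using dB' by simp
    then obtain b where b: "B = [:b:]" by (metis degree_0_id)
    then have b0: "b \<noteq> 0" using B0 by auto
    have "smult b B' = Q" using BB b by simp
    then have "B' = smult (inverse b) Q" using b0 by (metis smult_smult left_inverse smult_1_left)
    then have "?rB = smult (- inverse b) Q"
      using rQ by (simp add: reflect_poly_smult)
    then have "recip h \<in> Iset l m" using IsetQ rh by metis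
    then show False using notI by contradiction
  qed
  have drA: "degree ?rA < l"
  proof (rule ccontr)
    assume "\<not> degree ?rA < l"
    moreover have "degree ?rA \<le> degree A'" by (rule degree_reflect_poly_le)
    moreover have "degree A' \<le> l" using dvd_imp_degree_le[of A' P] AA P0 dP by auto
    ultimately have dA': "degree A' = l" by simp
    have "degree A + degree A' = l" using AA dP A0 A'0 degree_mult_eq by metis
    then have "degree A = 0" using dA' by simp
    then obtain a where a: "A = [:a:]" by (metis degree_0_id)
    then have a0: "a \<noteq> 0" using A0 by auto
    have "smult a A' = P" using AA a by simp
    then have "A' = smult (inverse a) P" using a0 by (metis smult_smult left_inverse smult_1_left)
    then have "?rA = smult (- inverse a) P"
      using rP by (simp add: reflect_poly_smult)
    then have "recip h \<in> Iset l m" using IsetP rh by metis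
    then show False using notI by contradiction
  qed
  have LHS: "Rideal l m (recip h) \<subseteq> Rideal l m g \<longleftrightarrow> A dvd ?rA \<and> B dvd ?rB"
  proof
    assume sub: "Rideal l m (recip h) \<subseteq> Rideal l m g"
    have "cls l m (recip h) \<in> Rideal l m (recip h)" unfolding Rideal_def
      by (metis (mono_tags) mem_Collect_eq mult_1_right)
    then have "cls l m (recip h) \<in> Rideal l m g" using sub by blast
    then obtain b where "cls l m (recip h) = cls l m (g * b)" unfolding Rideal_def by blast
    moreover have "recip h \<in> cls l m (recip h)" using Iset_0 by (simp add: cls_def)
    ultimately have "g * b - recip h \<in> Iset l m" by (simp add: cls_def)
    then obtain s t where st: "g * b - recip h = s * [:P:] + t * Lf Q"
      unfolding Iset_iff P_def Q_def by blast
    have E: "[:?rA:] * Lf ?rB = [:A:] * (Lf B * b) + (- s) * [:P:] + (- t) * Lf Q"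
    proof -
      have "recip h = g * b - (s * [:P:] + t * Lf Q)" using st by (simp add: algebra_simps)
      then show ?thesis unfolding rh g by (simp only: mult_ac) (simp add: algebra_simps)
    qed
    have "A dvd ?rA"
      by (rule keyK[OF E]) (use AA lQ dQ drB rB'0 in auto)
    moreover have "B dvd ?rB"
    proof -
      have "swp ([:?rA:] * Lf ?rB) = swp ([:A:] * (Lf B * b) + (- s) * [:P:] + (- t) * Lf Q)"
        using E by simp
      then have E2: "[:?rB:] * Lf ?rA = [:B:] * (Lf A * swp b) + swp (- t) * [:Q:] + swp (- s) * Lf P"
        by (simp only: swp_add swp_mult swp_const swp_Lf mult_ac add_ac)
      show ?thesis
        by (rule keyK[OF E2]) (use BB lP dP drA rA'0 in auto)
    qed
    ultimately show "A dvd ?rA \<and> B dvd ?rB" ..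
  next
    assume "A dvd ?rA \<and> B dvd ?rB"
    then obtain k1 k2 where k: "?rA = A * k1" "?rB = B * k2" by (auto elim!: dvdE)
    define w where "w = [:k1:] * Lf k2"
    have hw: "recip h = g * w"
      unfolding rh g k w_def by (simp only: Lf_mult const_mult mult_ac)
    show "Rideal l m (recip h) \<subseteq> Rideal l m g"
    proof
      fix x assume "x \<in> Rideal l m (recip h)"
      then obtain a where "x = cls l m (recip h * a)" unfolding Rideal_def by blast
      then have "x = cls l m (g * (w * a))" by (simp only: hw mult.assoc)
      then show "x \<in> Rideal l m g" unfolding Rideal_def by blast
    qed
  qed
  show ?thesis using LHS RHS by simp
qed

end
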